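(* Let $\mu$ be a probability measure on $(0,1]$ (with its Borel $\sigma$-algebra). For each $n\geq2$ and Borel $A\subseteq(0,1]$ define $$\mu_{n,\infty}(A)=\frac{\int_A \mathbb{E}_{n,p}[\tau]\,\mu(dp)}{\int_{(0,1]}\mathbb{E}_{n,p}[\tau]\,\mu(dp)}.$$ Then for every Borel set $A\subseteq(0,1]$, $\mu_{n,\infty}(A)\to\mu(A)$ as $n\to\infty$.
   Context: $G(n,p)$ denotes the Erdős–Rényi random graph on $[n]=\{1,\dots,n\}$ in which each edge is present independently with probability $p$. Given a realization $g$, let $(X_t)_{t\ge0}$ be the simple symmetric random walk on $g$ with $X_0=1$ and $\tau=\inf\{t\geq1:X_t=1\}$, with the convention $\tau=1$ if vertex $1$ is isolated. $\mathbb{E}_{n,p}[\tau]$ denotes the expectation of $\tau$ over both the walk and the random graph $G(n,p)$, i.e. $\mathbb{E}_{n,p}[\mathbb{E}_{G(n,p)}[\tau]]$. *)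

theory Defs
  imports "HOL-Probability.Probability"
begin

text \<open>Simple graphs on vertex set [n] = {1..n}, represented by their edge sets
  (sets of 2-element subsets of [n]).\<close>

definition all_edges :: "nat \<Rightarrow> nat set set" where
  "all_edges n = {e. \<exists>u v. 1 \<le> u \<and> u < v \<and> v \<le> n \<and> e = {u, v}}"

definition gnp_prob :: "nat \<Rightarrow> real \<Rightarrow> nat set set \<Rightarrow> real" where
  "gnp_prob n p g = p ^ card g * (1 - p) ^ (card (all_edges n) - card g)"

definition deg :: "nat set set \<Rightarrow> nat \<Rightarrow> nat" where
  "deg g v = card {u. {v, u} \<in> g}"

definition walk_step :: "nat set set \<Rightarrow> nat \<Rightarrow> nat \<Rightarrow> real" where
  "walk_step g u v = (if {u, v} \<in> g then 1 / real (deg g u) else 0)"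

text \<open>Probability (for the walk on the graph g on [n] started at X_0 = 1) that
  X_1, ..., X_t all differ from 1, i.e. P(tau > t): sum over all
  trajectories (X_1,...,X_t) in ([n]-{1})^t of the product of transition
  probabilities.\<close>
definition surv_prob :: "nat \<Rightarrow> nat set set \<Rightarrow> nat \<Rightarrow> real" where
  "surv_prob n g t =
     (\<Sum>xs\<in>{xs. length xs = t \<and> set xs \<subseteq> {2..n}}.
        \<Prod>i<t. walk_step g ((1 # xs) ! i) (xs ! i))"

text \<open>Expected return time E_g[tau] of the walk to vertex 1 (tau = inf{t \<ge> 1. X_t = 1}),
  computed by the tail-sum formula E[tau] = sum_{t \<ge> 0} P(tau > t) (valued in [0,\<infinity>]),
  with the convention tau = 1 if vertex 1 is isolated.\<close>
definition exp_return :: "nat \<Rightarrow> nat set set \<Rightarrow> ennreal" where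
  "exp_return n g = (if deg g 1 = 0 then 1 else (\<Sum>t. ennreal (surv_prob n g t)))"

definition exp_tau :: "nat \<Rightarrow> real \<Rightarrow> ennreal" where
  "exp_tau n p = (\<Sum>g\<in>Pow (all_edges n). ennreal (gnp_prob n p g) * exp_return n g)"

definition mu_tilt :: "real measure \<Rightarrow> nat \<Rightarrow> real set \<Rightarrow> ennreal" where
  "mu_tilt M n A = (\<integral>\<^sup>+ p\<in>A. exp_tau n p \<partial>M) / (\<integral>\<^sup>+ p. exp_tau n p \<partial>M)"

end

theory Submission
  imports Defs
begin


definition wt :: "real \<Rightarrow> 'a set \<Rightarrow> 'a set \<Rightarrow> real" where
  "wt p S g = p ^ card g * (1 - p) ^ (card S - card g)"

lemma wt_insert_in:
  assumes "finite S" "e \<notin> S" "g \<subseteq> S"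
  shows "wt p (insert e S) (insert e g) = p * wt p S g"
proof -
  have "e \<notin> g" using assms by auto
  moreover have "finite g" using assms finite_subset by blast
  moreover have "card g \<le> card S" using assms card_mono by blast
  ultimately show ?thesis using assms
    by (simp add: wt_def Suc_diff_le)
qed

lemma wt_insert_out:
  assumes "finite S" "e \<notin> S" "g \<subseteq> S"
  shows "wt p (insert e S) g = (1 - p) * wt p S g"
proof -
  have "card g \<le> card S" using assms card_mono by blast
  then show ?thesis using assms
    by (simp add: wt_def Suc_diff_le)
qed

lemma wt_split:
  assumes "finite S" "e \<notin> S"
  shows "(\<Sum>g\<in>Pow (insert e S). wt p (insert e S) g * F g) =
    p * (\<Sum>g\<in>Pow S. wt p S g * F (insert e g)) + (1 - p) * (\<Sum>g\<in>Pow S. wt p S g * F g)"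
proof -
  have fin: "finite (Pow S)" using assms by simp
  have disj: "Pow S \<inter> insert e ` Pow S = {}" using assms by auto
  have inj: "inj_on (insert e) (Pow S)" using assms
    by (auto simp: inj_on_def)
  have "(\<Sum>g\<in>Pow (insert e S). wt p (insert e S) g * F g) =
     (\<Sum>g\<in>Pow S. wt p (insert e S) g * F g) + (\<Sum>g\<in>insert e ` Pow S. wt p (insert e S) g * F g)"
    unfolding Pow_insert using fin disj by (simp add: sum.union_disjoint)
  also have "(\<Sum>g\<in>insert e ` Pow S. wt p (insert e S) g * F g) =
     (\<Sum>g\<in>Pow S. wt p (insert e S) (insert e g) * F (insert e g))"
    using inj by (simp add: sum.reindex)
  also have "\<dots> = p * (\<Sum>g\<in>Pow S. wt p S g * F (insert e g))"
    by (simp add: sum_distrib_left wt_insert_in[OF assms] mult.assoc)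
  also have "(\<Sum>g\<in>Pow S. wt p (insert e S) g * F g) = (1 - p) * (\<Sum>g\<in>Pow S. wt p S g * F g)"
    by (simp add: sum_distrib_left wt_insert_out[OF assms] mult.assoc)
  finally show ?thesis by simp
qed

lemma wt_sum1: "finite S \<Longrightarrow> (\<Sum>g\<in>Pow S. wt p S g) = 1"
proof (induction S rule: finite_induct)
  case empty then show ?case by (simp add: wt_def)
next
  case (insert e S)
  have "(\<Sum>g\<in>Pow (insert e S). wt p (insert e S) g) = p * (\<Sum>g\<in>Pow S. wt p S g) + (1 - p) * (\<Sum>g\<in>Pow S. wt p S g)"
    using wt_split[OF insert(1,2), of p "\<lambda>_. 1"] by simp
  then show ?case using insert by simp
qed

lemma wt_nonneg: "0 \<le> p \<Longrightarrow> p \<le> 1 \<Longrightarrow> 0 \<le> wt p S g"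
  by (simp add: wt_def)

lemma wt_prod2:
  assumes "finite T" "finite S" "S \<inter> T = {}"
  shows "(\<Sum>g\<in>Pow (S \<union> T). wt p (S \<union> T) g * (F (g \<inter> S) * G (g \<inter> T))) =
    (\<Sum>a\<in>Pow S. wt p S a * F a) * (\<Sum>b\<in>Pow T. wt p T b * G b)"
  using assms
proof (induction T arbitrary: G rule: finite_induct)
  case empty
  have "(\<Sum>g\<in>Pow S. wt p S g * (F (g \<inter> S) * G {})) = (\<Sum>g\<in>Pow S. wt p S g * F g) * G {}"
    by (auto simp: sum_distrib_right mult.assoc intro!: sum.cong simp: Int_absorb2)
  then show ?case by (simp add: wt_def)
next
  case (insert e T)
  have eS: "e \<notin> S \<union> T" using insert by auto
  have fin: "finite (S \<union> T)" using insert by auto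
  have *: "S \<union> insert e T = insert e (S \<union> T)" by auto
  have A: "(\<Sum>g\<in>Pow (S \<union> T). wt p (S \<union> T) g * (F (insert e g \<inter> S) * G (insert e g \<inter> insert e T)))
     = (\<Sum>g\<in>Pow (S \<union> T). wt p (S \<union> T) g * (F (g \<inter> S) * (G \<circ> insert e) (g \<inter> T)))"
  proof (rule sum.cong)
    fix g assume "g \<in> Pow (S \<union> T)"
    then have "insert e g \<inter> S = g \<inter> S" "insert e g \<inter> insert e T = insert e (g \<inter> T)"
      using insert by auto
    then show "wt p (S \<union> T) g * (F (insert e g \<inter> S) * G (insert e g \<inter> insert e T)) =
      wt p (S \<union> T) g * (F (g \<inter> S) * (G \<circ> insert e) (g \<inter> T))" by simp
  qed simp
  have B: "(\<Sum>g\<in>Pow (S \<union> T). wt p (S \<union> T) g * (F (g \<inter> S) * G (g \<inter> insert e T)))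
     = (\<Sum>g\<in>Pow (S \<union> T). wt p (S \<union> T) g * (F (g \<inter> S) * G (g \<inter> T)))"
  proof (rule sum.cong)
    fix g assume "g \<in> Pow (S \<union> T)"
    then have "g \<inter> insert e T = g \<inter> T" using eS by auto
    then show "wt p (S \<union> T) g * (F (g \<inter> S) * G (g \<inter> insert e T)) =
      wt p (S \<union> T) g * (F (g \<inter> S) * G (g \<inter> T))" by simp
  qed simp
  have "(\<Sum>g\<in>Pow (S \<union> insert e T). wt p (S \<union> insert e T) g * (F (g \<inter> S) * G (g \<inter> insert e T)))
    = p * (\<Sum>g\<in>Pow (S \<union> T). wt p (S \<union> T) g * (F (insert e g \<inter> S) * G (insert e g \<inter> insert e T)))
      + (1 - p) * (\<Sum>g\<in>Pow (S \<union> T). wt p (S \<union> T) g * (F (g \<inter> S) * G (g \<inter> insert e T)))"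
    unfolding * by (rule wt_split[OF fin eS])
  also have "\<dots> = p * ((\<Sum>a\<in>Pow S. wt p S a * F a) * (\<Sum>b\<in>Pow T. wt p T b * (G \<circ> insert e) b))
      + (1 - p) * ((\<Sum>a\<in>Pow S. wt p S a * F a) * (\<Sum>b\<in>Pow T. wt p T b * G b))"
    unfolding A B using insert.IH[of "G \<circ> insert e"] insert.IH[of G] insert.prems by simp
  also have "\<dots> = (\<Sum>a\<in>Pow S. wt p S a * F a) * (p * (\<Sum>b\<in>Pow T. wt p T b * G (insert e b))
      + (1 - p) * (\<Sum>b\<in>Pow T. wt p T b * G b))"
    by (simp add: algebra_simps)
  also have "\<dots> = (\<Sum>a\<in>Pow S. wt p S a * F a) * (\<Sum>b\<in>Pow (insert e T). wt p (insert e T) b * G b)"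
    by (subst wt_split[OF insert(1,2)]) (rule refl)
  finally show ?case .
qed

lemma wt_marg:
  assumes "finite E" "S \<subseteq> E"
  shows "(\<Sum>g\<in>Pow E. wt p E g * F (g \<inter> S)) = (\<Sum>a\<in>Pow S. wt p S a * F a)"
proof -
  have E: "S \<union> (E - S) = E" using assms by auto
  have "(\<Sum>g\<in>Pow E. wt p E g * F (g \<inter> S)) =
     (\<Sum>g\<in>Pow (S \<union> (E - S)). wt p (S \<union> (E - S)) g * (F (g \<inter> S) * (\<lambda>_. 1) (g \<inter> (E - S))))"
    by (simp only: E mult_1_right)
  also have "\<dots> = (\<Sum>a\<in>Pow S. wt p S a * F a) * (\<Sum>b\<in>Pow (E - S). wt p (E - S) b * 1)"
    by (rule wt_prod2) (use assms rev_finite_subset[of E S] in auto)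
  finally show ?thesis using wt_sum1[of "E - S" p] assms by simp
qed

lemma wt_prod2':
  assumes "finite E" "S \<subseteq> E" "T \<subseteq> E" "S \<inter> T = {}"
  shows "(\<Sum>g\<in>Pow E. wt p E g * (F (g \<inter> S) * G (g \<inter> T))) =
    (\<Sum>a\<in>Pow S. wt p S a * F a) * (\<Sum>b\<in>Pow T. wt p T b * G b)"
proof -
  have "(\<Sum>g\<in>Pow E. wt p E g * (F (g \<inter> S) * G (g \<inter> T))) =
    (\<Sum>g\<in>Pow E. wt p E g * (\<lambda>x. F (x \<inter> S) * G (x \<inter> T)) (g \<inter> (S \<union> T)))"
  proof (intro sum.cong refl)
    fix g
    have "g \<inter> (S \<union> T) \<inter> S = g \<inter> S" "g \<inter> (S \<union> T) \<inter> T = g \<inter> T" by blast+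
    then show "wt p E g * (F (g \<inter> S) * G (g \<inter> T)) =
      wt p E g * (\<lambda>x. F (x \<inter> S) * G (x \<inter> T)) (g \<inter> (S \<union> T))" by simp
  qed
  also have "\<dots> = (\<Sum>a\<in>Pow (S \<union> T). wt p (S \<union> T) a * (F (a \<inter> S) * G (a \<inter> T)))"
    by (rule wt_marg) (use assms in auto)
  also have "\<dots> = (\<Sum>a\<in>Pow S. wt p S a * F a) * (\<Sum>b\<in>Pow T. wt p T b * G b)"
    by (rule wt_prod2) (use assms rev_finite_subset[of E S] rev_finite_subset[of E T] in auto)
  finally show ?thesis .
qed

lemma wt_prodI:
  assumes "finite I" "finite E" "\<And>i. i \<in> I \<Longrightarrow> P i \<subseteq> E"
    "\<And>i j. i \<in> I \<Longrightarrow> j \<in> I \<Longrightarrow> i \<noteq> j \<Longrightarrow> P i \<inter> P j = {}"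
  shows "(\<Sum>g\<in>Pow E. wt p E g * (\<Prod>i\<in>I. f i (g \<inter> P i))) =
    (\<Prod>i\<in>I. \<Sum>a\<in>Pow (P i). wt p (P i) a * f i a)"
  using assms
proof (induction I arbitrary: E rule: finite_induct)
  case empty then show ?case using wt_sum1[of E p] by simp
next
  case (insert j I)
  let ?U = "\<Union>i\<in>I. P i"
  have U: "?U \<subseteq> E" using insert.prems(2) by blast
  have finU: "finite ?U" using U insert.prems(1) rev_finite_subset by blast
  have disj: "P j \<inter> ?U = {}" using insert.prems(3) insert.hyps(2) by blast
  have "(\<Sum>g\<in>Pow E. wt p E g * (\<Prod>i\<in>insert j I. f i (g \<inter> P i))) =
     (\<Sum>g\<in>Pow E. wt p E g * (f j (g \<inter> P j) * (\<lambda>x. \<Prod>i\<in>I. f i (x \<inter> P i)) (g \<inter> ?U)))"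
  proof (intro sum.cong refl)
    fix g
    have "\<And>i. i \<in> I \<Longrightarrow> g \<inter> ?U \<inter> P i = g \<inter> P i" by auto
    then show "wt p E g * (\<Prod>i\<in>insert j I. f i (g \<inter> P i)) =
      wt p E g * (f j (g \<inter> P j) * (\<lambda>x. \<Prod>i\<in>I. f i (x \<inter> P i)) (g \<inter> ?U))"
      using insert by (simp add: prod.insert)
  qed
  also have "\<dots> = (\<Sum>a\<in>Pow (P j). wt p (P j) a * f j a) *
       (\<Sum>b\<in>Pow ?U. wt p ?U b * (\<Prod>i\<in>I. f i (b \<inter> P i)))"
    by (rule wt_prod2') (use insert.prems U disj in auto)
  also have "(\<Sum>b\<in>Pow ?U. wt p ?U b * (\<Prod>i\<in>I. f i (b \<inter> P i))) =
     (\<Prod>i\<in>I. \<Sum>a\<in>Pow (P i). wt p (P i) a * f i a)"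
    by (rule insert.IH) (use insert.prems finU in auto)
  finally show ?case using insert.hyps by simp
qed

lemma wt_edge:
  assumes "finite E" "e \<in> E"
  shows "(\<Sum>g\<in>Pow E. wt p E g * (if e \<in> g then 1 else 0)) = p"
proof -
  have "(\<Sum>g\<in>Pow E. wt p E g * (if e \<in> g then 1 else 0)) =
        (\<Sum>g\<in>Pow E. wt p E g * (\<lambda>x. if e \<in> x then 1 else 0) (g \<inter> {e}))"
    by (intro sum.cong) auto
  also have "\<dots> = (\<Sum>a\<in>Pow {e}. wt p {e} a * (if e \<in> a then 1 else 0))"
    by (rule wt_marg) (use assms in auto)
  also have "Pow {e} = {{}, {e}}" by auto
  finally show ?thesis by (simp add: wt_def)
qed



definition adj :: "nat set set \<Rightarrow> nat \<Rightarrow> nat \<Rightarrow> real" where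
  "adj g u v = (if {u, v} \<in> g then 1 else 0)"

lemma adj_sym: "adj g u v = adj g v u"
  by (simp add: adj_def insert_commute)

lemma edge_in_range:
  assumes "g \<subseteq> all_edges n" "{v, u} \<in> g"
  shows "u \<in> {1..n}" "v \<in> {1..n}" "u \<noteq> v"
proof -
  obtain a b where "1 \<le> a" "a < b" "b \<le> n" "{v, u} = {a, b}"
    using assms unfolding all_edges_def by blast
  then show "u \<in> {1..n}" "v \<in> {1..n}" "u \<noteq> v"
    by (auto simp: doubleton_eq_iff)
qed

lemma nbrs_sub:
  assumes "g \<subseteq> all_edges n"
  shows "{u. {v, u} \<in> g} \<subseteq> {1..n}"
  using edge_in_range[OF assms] by blast

lemma sum_indicator_card:
  assumes "finite B" "A \<subseteq> B"
  shows "(\<Sum>u\<in>B. if u \<in> A then 1 else 0 :: real) = real (card A)"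
proof -
  have "(\<Sum>u\<in>{u\<in>B. u \<in> A}. 1 :: real) = (\<Sum>u\<in>B. if u \<in> A then 1 else 0)"
    by (rule sum.inter_filter) (fact assms)
  then have "(\<Sum>u\<in>B. if u \<in> A then 1 else 0 :: real) = (\<Sum>u\<in>{u\<in>B. u \<in> A}. 1)"
    by simp
  also have "{u\<in>B. u \<in> A} = A" using assms by auto
  finally show ?thesis by simp
qed

lemma deg_sum:
  assumes "g \<subseteq> all_edges n"
  shows "real (deg g v) = (\<Sum>u\<in>{1..n}. adj g v u)"
  unfolding deg_def adj_def
  using sum_indicator_card[of "{1..n}" "{u. {v, u} \<in> g}"] nbrs_sub[OF assms, of v]
  by simp

lemma deg_le:
  assumes "g \<subseteq> all_edges n"
  shows "deg g v \<le> n"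
  unfolding deg_def using card_mono[OF _ nbrs_sub[OF assms, of v]] by simp

lemma deg_pos:
  assumes "g \<subseteq> all_edges n" "{v, u} \<in> g"
  shows "deg g v > 0"
proof -
  have "finite {u. {v, u} \<in> g}" using nbrs_sub[OF assms(1)] finite_subset by blast
  moreover have "u \<in> {u. {v, u} \<in> g}" using assms by simp
  ultimately show ?thesis unfolding deg_def by (simp add: card_gt_0_iff) blast
qed

lemma deg_step:
  assumes "g \<subseteq> all_edges n"
  shows "real (deg g v) * walk_step g v x = adj g v x"
  using deg_pos[OF assms, of v x] unfolding walk_step_def adj_def by auto

lemma step_nonneg: "0 \<le> walk_step g v x"
  by (simp add: walk_step_def)

lemma step_sum_all:
  assumes "g \<subseteq> all_edges n"
  shows "(\<Sum>x\<in>{1..n}. walk_step g v x) = (if deg g v = 0 then 0 else 1)"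
proof (cases "deg g v = 0")
  case True
  then have "\<And>x. walk_step g v x = 0"
    using deg_pos[OF assms, of v] by (auto simp: walk_step_def)
  then show ?thesis using True by simp
next
  case False
  have "(\<Sum>x\<in>{1..n}. walk_step g v x) = (\<Sum>x\<in>{1..n}. adj g v x) / real (deg g v)"
    unfolding sum_divide_distrib
    by (intro sum.cong refl) (simp add: walk_step_def adj_def)
  also have "\<dots> = 1" using False deg_sum[OF assms, of v] by simp
  finally show ?thesis using False by simp
qed

lemma V_insert: "n \<ge> 1 \<Longrightarrow> {1..n} = insert (1::nat) {2..n}"
  by auto

lemma step_sum_V:
  assumes "g \<subseteq> all_edges n" "n \<ge> 1"
  shows "(\<Sum>x\<in>{2..n}. walk_step g v x) = (if deg g v = 0 then 0 else 1) - walk_step g v 1"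
proof -
  have "(\<Sum>x\<in>{1..n}. walk_step g v x) = walk_step g v 1 + (\<Sum>x\<in>{2..n}. walk_step g v x)"
    unfolding V_insert[OF assms(2)] by (subst sum.insert) auto
  then show ?thesis using step_sum_all[OF assms(1)] by simp
qed

lemma step_sum_V_le:
  assumes "g \<subseteq> all_edges n" "n \<ge> 1"
  shows "(\<Sum>x\<in>{2..n}. walk_step g v x) \<le> 1"
  using step_sum_V[OF assms, of v] step_nonneg[of g v 1] by (auto split: if_splits)

lemma deg_sum_V:
  assumes "g \<subseteq> all_edges n" "n \<ge> 1"
  shows "(\<Sum>x\<in>{2..n}. adj g v x) = real (deg g v) - adj g v 1"
proof -
  have "(\<Sum>x\<in>{1..n}. adj g v x) = adj g v 1 + (\<Sum>x\<in>{2..n}. adj g v x)"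
    unfolding V_insert[OF assms(2)] by (subst sum.insert) auto
  then show ?thesis using deg_sum[OF assms(1)] by simp
qed

fun sv :: "nat set set \<Rightarrow> nat \<Rightarrow> nat \<Rightarrow> nat \<Rightarrow> real" where
  "sv g n 0 v = 1"
| "sv g n (Suc t) v = (\<Sum>x\<in>{2..n}. walk_step g v x * sv g n t x)"

lemma sv_bounds:
  assumes "g \<subseteq> all_edges n" "n \<ge> 1"
  shows "0 \<le> sv g n t v \<and> sv g n t v \<le> 1"
proof (induction t arbitrary: v)
  case 0 then show ?case by simp
next
  case (Suc t)
  have "(\<Sum>x\<in>{2..n}. walk_step g v x * sv g n t x) \<le> (\<Sum>x\<in>{2..n}. walk_step g v x)"
    by (intro sum_mono) (use Suc step_nonneg in \<open>simp add: mult_left_le\<close>)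
  then show ?case using step_sum_V_le[OF assms, of v] Suc step_nonneg
    by (auto intro!: sum_nonneg)
qed

lemma sv_mono:
  assumes "g \<subseteq> all_edges n" "n \<ge> 1"
  shows "sv g n (Suc t) v \<le> sv g n t v"
proof (induction t arbitrary: v)
  case 0 then show ?case using sv_bounds[OF assms, of 1 v] by simp
next
  case (Suc t)
  show ?case
    by (subst sv.simps, subst (2) sv.simps, intro sum_mono mult_left_mono)
       (use Suc step_nonneg in auto)
qed

lemma sv_mono':
  assumes "g \<subseteq> all_edges n" "n \<ge> 1" "t \<le> t'"
  shows "sv g n t' v \<le> sv g n t v"
  using assms(3)
proof (induction t' rule: dec_induct)
  case base then show ?case by simp
next
  case (step m) then show ?case using sv_mono[OF assms(1,2), of m v] by linarith
qed

definition LS :: "nat set set \<Rightarrow> nat \<Rightarrow> nat \<Rightarrow> nat \<Rightarrow> real" where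
  "LS g n a t = (\<Sum>xs\<in>{xs. length xs = t \<and> set xs \<subseteq> {2..n}}.
        \<Prod>i<t. walk_step g ((a # xs) ! i) (xs ! i))"

lemma lists_Suc:
  "{xs. length xs = Suc t \<and> set xs \<subseteq> A} =
   (\<lambda>(x, ys). x # ys) ` (A \<times> {ys. length ys = t \<and> set ys \<subseteq> A})"
  by (auto simp: length_Suc_conv image_iff)

lemma LS_Suc: "LS g n a (Suc t) = (\<Sum>x\<in>{2..n}. walk_step g a x * LS g n x t)"
proof -
  have fin: "finite {ys. length ys = t \<and> set ys \<subseteq> {2..n}}"
    using finite_lists_length_eq[of "{2..n}" t] by (simp add: conj_commute)
  have inj: "inj_on (\<lambda>(x, ys). x # ys) ({2..n} \<times> {ys. length ys = t \<and> set ys \<subseteq> {2..n}})"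
    by (auto simp: inj_on_def)
  have "LS g n a (Suc t) = (\<Sum>(x, ys)\<in>{2..n} \<times> {ys. length ys = t \<and> set ys \<subseteq> {2..n}}.
        \<Prod>i<Suc t. walk_step g ((a # x # ys) ! i) ((x # ys) ! i))"
    unfolding LS_def lists_Suc by (subst sum.reindex[OF inj]) (simp add: case_prod_beta)
  also have "\<dots> = (\<Sum>(x, ys)\<in>{2..n} \<times> {ys. length ys = t \<and> set ys \<subseteq> {2..n}}.
        walk_step g a x * (\<Prod>i<t. walk_step g ((x # ys) ! i) (ys ! i)))"
    by (intro sum.cong refl) (auto simp del: prod.lessThan_Suc simp add: prod.lessThan_Suc_shift)
  also have "\<dots> = (\<Sum>x\<in>{2..n}. walk_step g a x * LS g n x t)"
    unfolding LS_def sum.cartesian_product[symmetric] sum_distrib_left by simp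
  finally show ?thesis .
qed

lemma LS_sv: "LS g n a t = sv g n t a"
proof (induction t arbitrary: a)
  case 0
  have "{xs. length xs = 0 \<and> set xs \<subseteq> {2..n}} = {[]}" by auto
  then show ?case by (simp add: LS_def)
next
  case (Suc t) then show ?case by (simp add: LS_Suc)
qed

lemma surv_sv: "surv_prob n g t = sv g n t 1"
  using LS_sv[of g n 1 t] unfolding LS_def surv_prob_def by simp

lemma telescope_step:
  assumes "g \<subseteq> all_edges n" "n \<ge> 1"
  shows "real (deg g 1) * sv g n (Suc T) 1 =
     (\<Sum>x\<in>{2..n}. real (deg g x) * (sv g n T x - sv g n (Suc T) x))"
proof -
  have L: "real (deg g 1) * sv g n (Suc T) 1 = (\<Sum>x\<in>{2..n}. adj g x 1 * sv g n T x)"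
    by (simp add: sum_distrib_left mult.assoc[symmetric] deg_step[OF assms(1)] adj_sym)
  have "(\<Sum>x\<in>{2..n}. real (deg g x) * sv g n (Suc T) x) =
        (\<Sum>x\<in>{2..n}. \<Sum>y\<in>{2..n}. adj g x y * sv g n T y)"
    by (simp add: sum_distrib_left mult.assoc[symmetric] deg_step[OF assms(1)])
  also have "\<dots> = (\<Sum>y\<in>{2..n}. \<Sum>x\<in>{2..n}. adj g y x * sv g n T y)"
    by (subst sum.swap) (simp add: adj_sym)
  also have "\<dots> = (\<Sum>y\<in>{2..n}. (real (deg g y) - adj g y 1) * sv g n T y)"
    by (simp add: sum_distrib_right[symmetric] deg_sum_V[OF assms])
  finally have R: "(\<Sum>x\<in>{2..n}. real (deg g x) * sv g n (Suc T) x) =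
     (\<Sum>y\<in>{2..n}. (real (deg g y) - adj g y 1) * sv g n T y)" .
  show ?thesis
    unfolding right_diff_distrib sum_subtractf R L
    by (simp add: left_diff_distrib sum_subtractf)
qed

lemma telescope:
  assumes "g \<subseteq> all_edges n" "n \<ge> 1"
  shows "real (deg g 1) * (\<Sum>t<T. sv g n (Suc t) 1) =
     (\<Sum>x\<in>{2..n}. real (deg g x) * (1 - sv g n T x))"
proof (induction T)
  case 0 then show ?case by simp
next
  case (Suc T)
  have "real (deg g 1) * (\<Sum>t<Suc T. sv g n (Suc t) 1) =
     real (deg g 1) * (\<Sum>t<T. sv g n (Suc t) 1) + real (deg g 1) * sv g n (Suc T) 1"
    by (simp add: distrib_left)
  also have "\<dots> = (\<Sum>x\<in>{2..n}. real (deg g x) * (1 - sv g n T x)) +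
      (\<Sum>x\<in>{2..n}. real (deg g x) * (sv g n T x - sv g n (Suc T) x))"
    using Suc telescope_step[OF assms] by simp
  also have "\<dots> = (\<Sum>x\<in>{2..n}. real (deg g x) * (1 - sv g n (Suc T) x))"
    by (simp add: sum.distrib[symmetric] algebra_simps)
  finally show ?case .
qed



definition good :: "nat set set \<Rightarrow> nat \<Rightarrow> bool" where
  "good g n = (\<forall>v\<in>{2..n}. {1, v} \<in> g \<or> (\<exists>w\<in>{2..n}. {v, w} \<in> g \<and> {w, 1} \<in> g))"

definition Ub :: "nat set set \<Rightarrow> nat \<Rightarrow> real" where
  "Ub g n = (if deg g 1 = 0 then 1 else 1 + (\<Sum>x\<in>{2..n}. real (deg g x)) / real (deg g 1))"

context
  fixes g n
  assumes g: "g \<subseteq> all_edges n" and n: "n \<ge> 2"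
begin

lemma n1: "n \<ge> 1" using n by simp

lemma psum:
  assumes "deg g 1 > 0"
  shows "(\<Sum>t<Suc T. sv g n t 1) = 1 + (\<Sum>x\<in>{2..n}. real (deg g x) * (1 - sv g n T x)) / real (deg g 1)"
proof -
  have "(\<Sum>t<Suc T. sv g n t 1) = 1 + (\<Sum>t<T. sv g n (Suc t) 1)"
    by (simp only: sum.lessThan_Suc_shift sv.simps(1))
  moreover have "real (deg g 1) * (\<Sum>t<T. sv g n (Suc t) 1) =
     (\<Sum>x\<in>{2..n}. real (deg g x) * (1 - sv g n T x))" by (rule telescope[OF g n1])
  ultimately show ?thesis using assms by (simp add: field_simps)
qed

lemma psum_le:
  assumes "deg g 1 > 0"
  shows "(\<Sum>t<T. sv g n t 1) \<le> Ub g n"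
proof -
  have "(\<Sum>t<T. sv g n t 1) \<le> (\<Sum>t<Suc T. sv g n t 1)"
    using sv_bounds[OF g n1, of T 1] by simp
  also have "\<dots> \<le> 1 + (\<Sum>x\<in>{2..n}. real (deg g x)) / real (deg g 1)"
    unfolding psum[OF assms]
    by (intro add_left_mono divide_right_mono sum_mono)
       (use sv_bounds[OF g n1] in \<open>auto simp: mult_left_le\<close>)
  finally show ?thesis using assms by (simp add: Ub_def)
qed

lemma sv_summable:
  assumes "deg g 1 > 0"
  shows "summable (\<lambda>t. sv g n t 1)"
  by (rule summableI_nonneg_bounded[where x="Ub g n"]) (use sv_bounds[OF g n1] psum_le[OF assms] in auto)

lemma sv_suminf_le:
  assumes "deg g 1 > 0"
  shows "(\<Sum>t. sv g n t 1) \<le> Ub g n"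
  by (rule suminf_le_const[OF sv_summable[OF assms]]) (use psum_le[OF assms] in auto)

lemma sv_suminf_ge:
  assumes "deg g 1 > 0"
  shows "1 \<le> (\<Sum>t. sv g n t 1)"
proof -
  have "(\<Sum>t\<in>{0}. sv g n t 1) \<le> (\<Sum>t. sv g n t 1)"
    by (rule sum_le_suminf[OF sv_summable[OF assms]]) (use sv_bounds[OF g n1] in auto)
  then show ?thesis by simp
qed

lemma sv_shift:
  assumes "c \<ge> 0" "\<forall>x\<in>{2..n}. sv g n t x \<le> c"
  shows "\<forall>v\<in>{2..n}. sv g n (k + t) v \<le> sv g n k v * c"
proof (induction k)
  case 0 then show ?case using assms by simp
next
  case (Suc k)
  show ?case
  proof
    fix v assume "v \<in> {2..n}"
    have "sv g n (Suc k + t) v = (\<Sum>x\<in>{2..n}. walk_step g v x * sv g n (k + t) x)" by simp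
    also have "\<dots> \<le> (\<Sum>x\<in>{2..n}. walk_step g v x * (sv g n k x * c))"
      by (intro sum_mono mult_left_mono) (use Suc step_nonneg in auto)
    also have "\<dots> = sv g n (Suc k) v * c"
      by (simp add: sum_distrib_right mult.assoc)
    finally show "sv g n (Suc k + t) v \<le> sv g n (Suc k) v * c" .
  qed
qed

lemma step_ge:
  assumes "{v, w} \<in> g"
  shows "walk_step g v w \<ge> 1 / real n"
proof -
  have "deg g v > 0" by (rule deg_pos[OF g assms])
  moreover have "deg g v \<le> n" by (rule deg_le[OF g])
  ultimately show ?thesis using assms by (simp add: walk_step_def frac_le)
qed

lemma sv1_adj:
  assumes "{v, 1} \<in> g"
  shows "sv g n 1 v \<le> 1 - 1 / real n"
proof -
  have "deg g v \<noteq> 0" using deg_pos[OF g assms] by simp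
  then have "sv g n 1 v = 1 - walk_step g v 1"
    using step_sum_V[OF g n1, of v] by simp
  then show ?thesis using step_ge[OF assms] by simp
qed

lemma sv2_good:
  assumes "good g n" "v \<in> {2..n}"
  shows "sv g n 2 v \<le> 1 - 1 / real n ^ 2"
proof -
  have npos: "real n > 0" using n by simp
  have "1 - 1 / real n \<le> 1 - 1 / real n ^ 2"
    using n by (simp add: power2_eq_square frac_le)
  from assms consider "{1, v} \<in> g" | w where "w \<in> {2..n}" "{v, w} \<in> g" "{w, 1} \<in> g"
    unfolding good_def by blast
  then show ?thesis
  proof cases
    case 1
    then have "{v, 1} \<in> g" by (simp add: insert_commute)
    then have "sv g n 1 v \<le> 1 - 1 / real n" by (rule sv1_adj)
    moreover have "sv g n 2 v \<le> sv g n 1 v" using sv_mono[OF g n1, of 1 v] by (simp add: numeral_2_eq_2)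
    ultimately show ?thesis using \<open>1 - 1 / real n \<le> 1 - 1 / real n ^ 2\<close> by linarith
  next
    case 2
    have sw: "sv g n 1 w \<le> 1 - 1 / real n" by (rule sv1_adj[OF 2(3)])
    have "sv g n 2 v = (\<Sum>x\<in>{2..n}. walk_step g v x * sv g n 1 x)" by (simp add: numeral_2_eq_2)
    also have "\<dots> = (\<Sum>x\<in>{2..n}. walk_step g v x) - (\<Sum>x\<in>{2..n}. walk_step g v x * (1 - sv g n 1 x))"
      by (simp add: sum_subtractf[symmetric] algebra_simps)
    also have "\<dots> \<le> 1 - walk_step g v w * (1 - sv g n 1 w)"
    proof -
      have "walk_step g v w * (1 - sv g n 1 w) \<le> (\<Sum>x\<in>{2..n}. walk_step g v x * (1 - sv g n 1 x))"
        by (rule member_le_sum[of w "{2..n}" "\<lambda>x. walk_step g v x * (1 - sv g n 1 x)"])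
           (use 2 sv_bounds[OF g n1, of 1] step_nonneg in \<open>auto simp del: sv.simps\<close>)
      then show ?thesis using step_sum_V_le[OF g n1, of v] by linarith
    qed
    also have "\<dots> \<le> 1 - (1 / real n) * (1 / real n)"
    proof -
      have "(1 / real n) * (1 / real n) \<le> walk_step g v w * (1 - sv g n 1 w)"
        by (intro mult_mono) (use step_ge[OF 2(2)] sw step_nonneg in auto)
      then show ?thesis by linarith
    qed
    finally show ?thesis by (simp add: power2_eq_square)
  qed
qed

lemma sv_geom:
  assumes "good g n"
  shows "\<forall>v\<in>{2..n}. sv g n (2 * j) v \<le> (1 - 1 / real n ^ 2) ^ j"
proof (induction j)
  case 0 then show ?case by simp
next
  case (Suc j)
  have r: "0 \<le> (1 - 1 / real n ^ 2) ^ j"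
    using n by (intro zero_le_power) (simp add: field_simps)
  have A: "\<forall>v\<in>{2..n}. sv g n (2 + 2 * j) v \<le> sv g n 2 v * (1 - 1 / real n ^ 2) ^ j"
    by (rule sv_shift[OF r Suc])
  show ?case
  proof
    fix v assume v: "v \<in> {2..n}"
    have e: "2 * Suc j = 2 + 2 * j" by simp
    have "sv g n (2 * Suc j) v \<le> sv g n 2 v * (1 - 1 / real n ^ 2) ^ j"
      unfolding e using A v by blast
    also have "\<dots> \<le> (1 - 1 / real n ^ 2) * (1 - 1 / real n ^ 2) ^ j"
      by (rule mult_right_mono[OF sv2_good[OF assms v] r])
    finally show "sv g n (2 * Suc j) v \<le> (1 - 1 / real n ^ 2) ^ Suc j" by simp
  qed
qed

lemma good_deg1:
  assumes "good g n"
  shows "deg g 1 > 0"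
proof -
  have "2 \<in> {2..n}" using n by simp
  then consider "{1, 2} \<in> g" | w where "{w, 1} \<in> g"
    using assms unfolding good_def by blast
  then show ?thesis
  proof cases
    case 1 then show ?thesis using deg_pos[OF g] by blast
  next
    case 2 then have "{1, w} \<in> g" by (simp add: insert_commute)
    then show ?thesis using deg_pos[OF g] by blast
  qed
qed

lemma sv_suminf_good:
  assumes "good g n"
  shows "(\<Sum>t. sv g n t 1) = Ub g n"
proof (rule antisym)
  have D: "deg g 1 > 0" by (rule good_deg1[OF assms])
  show "(\<Sum>t. sv g n t 1) \<le> Ub g n" by (rule sv_suminf_le[OF D])
  define r where "r = 1 - 1 / real n ^ 2"
  have r0: "0 \<le> r" "r < 1" using n by (auto simp: r_def field_simps)
  let ?X = "\<lambda>j. 1 + (\<Sum>x\<in>{2..n}. real (deg g x) * (1 - r ^ j)) / real (deg g 1)"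
  have lim: "?X \<longlonglongrightarrow> 1 + (\<Sum>x\<in>{2..n}. real (deg g x) * (1 - 0)) / real (deg g 1)"
    using LIMSEQ_realpow_zero[OF r0] r0 D by (intro tendsto_intros) auto
  have "?X j \<le> (\<Sum>t. sv g n t 1)" for j
  proof -
    have "?X j \<le> 1 + (\<Sum>x\<in>{2..n}. real (deg g x) * (1 - sv g n (2 * j) x)) / real (deg g 1)"
      by (intro add_left_mono divide_right_mono sum_mono mult_left_mono)
         (use sv_geom[OF assms] in \<open>auto simp: r_def\<close>)
    also have "\<dots> = (\<Sum>t<Suc (2 * j). sv g n t 1)" by (rule psum[OF D, symmetric])
    also have "\<dots> \<le> (\<Sum>t. sv g n t 1)"
      by (rule sum_le_suminf[OF sv_summable[OF D]]) (use sv_bounds[OF g n1] in auto)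
    finally show ?thesis .
  qed
  then have "1 + (\<Sum>x\<in>{2..n}. real (deg g x) * (1 - 0)) / real (deg g 1) \<le> (\<Sum>t. sv g n t 1)"
    by (intro LIMSEQ_le_const2[OF lim]) auto
  then show "Ub g n \<le> (\<Sum>t. sv g n t 1)" using D by (simp add: Ub_def)
qed

lemma exp_return_eq:
  "\<exists>r. exp_return n g = ennreal r \<and> 1 \<le> r \<and> r \<le> Ub g n \<and> (good g n \<longrightarrow> r = Ub g n)"
proof (cases "deg g 1 = 0")
  case True
  then have "\<not> good g n" using good_deg1 by auto
  then show ?thesis using True by (auto simp: exp_return_def Ub_def)
next
  case False
  then have D: "deg g 1 > 0" by simp
  have "(\<Sum>t. ennreal (sv g n t 1)) = ennreal (\<Sum>t. sv g n t 1)"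
    by (rule suminf_ennreal2) (use sv_bounds[OF g n1] sv_summable[OF D] in auto)
  then have "exp_return n g = ennreal (\<Sum>t. sv g n t 1)"
    unfolding exp_return_def surv_sv using False by simp
  then show ?thesis
    using sv_suminf_ge[OF D] sv_suminf_le[OF D] sv_suminf_good by blast
qed

end



lemma finite_all_edges: "finite (all_edges n)"
proof -
  have "all_edges n \<subseteq> Pow {1..n}" unfolding all_edges_def by auto
  then show ?thesis by (rule finite_subset) simp
qed

lemma edge_mem:
  assumes "1 \<le> x" "x \<le> n" "1 \<le> u" "u \<le> n" "x \<noteq> u"
  shows "{x, u} \<in> all_edges n"
proof (cases "x < u")
  case True
  then have "1 \<le> x \<and> x < u \<and> u \<le> n \<and> {x, u} = {x, u}" using assms by auto
  then show ?thesis unfolding all_edges_def by blast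
next
  case False
  then have "1 \<le> u \<and> u < x \<and> x \<le> n \<and> {x, u} = {u, x}" using assms by (auto simp: insert_commute)
  then show ?thesis unfolding all_edges_def by blast
qed

definition star :: "nat \<Rightarrow> nat set set" where
  "star n = (\<lambda>u. {1, u}) ` {2..n}"

lemma inj_star: "inj_on (\<lambda>u. {1::nat, u}) {2..n}"
  by (auto simp: inj_on_def doubleton_eq_iff)

lemma card_star: "card (star n) = n - 1"
  unfolding star_def using card_image[OF inj_star] by simp

lemma star_sub: "star n \<subseteq> all_edges n"
proof
  fix e assume "e \<in> star n"
  then obtain u where u: "u \<in> {2..n}" "e = {1, u}" unfolding star_def by blast
  then have "1 \<le> (1::nat) \<and> 1 < u \<and> u \<le> n \<and> e = {1, u}" by auto
  then show "e \<in> all_edges n" unfolding all_edges_def by blast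
qed

lemma deg1_star:
  assumes g: "g \<subseteq> all_edges n"
  shows "deg g 1 = card (g \<inter> star n)"
proof -
  have "g \<inter> star n = (\<lambda>u. {1, u}) ` {u. {1, u} \<in> g}"
  proof
    show "g \<inter> star n \<subseteq> (\<lambda>u. {1, u}) ` {u. {1, u} \<in> g}" unfolding star_def by auto
    show "(\<lambda>u. {1, u}) ` {u. {1, u} \<in> g} \<subseteq> g \<inter> star n"
    proof
      fix e assume "e \<in> (\<lambda>u. {1::nat, u}) ` {u. {1, u} \<in> g}"
      then obtain u where u: "e = {1, u}" "{1, u} \<in> g" by blast
      then have "u \<in> {1..n}" "u \<noteq> 1" using edge_in_range[OF g u(2)] by auto
      then have "u \<in> {2..n}" by auto
      then show "e \<in> g \<inter> star n" using u unfolding star_def by auto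
    qed
  qed
  moreover have "inj_on (\<lambda>u. {1::nat, u}) {u. {1, u} \<in> g}"
    by (auto simp: inj_on_def doubleton_eq_iff)
  ultimately show ?thesis unfolding deg_def by (simp add: card_image)
qed

definition rest :: "nat \<Rightarrow> nat set set" where
  "rest n = all_edges n - star n"

definition Asum :: "nat \<Rightarrow> nat set set \<Rightarrow> real" where
  "Asum n h = (\<Sum>x\<in>{2..n}. \<Sum>u\<in>{2..n}. adj h x u)"

lemma adj_self:
  assumes "g \<subseteq> all_edges n" shows "adj g v v = 0"
proof -
  have "{v, v} \<notin> g" using edge_in_range[OF assms, of v v] by auto
  then show ?thesis by (simp add: adj_def)
qed

lemma adj_rest:
  assumes g: "g \<subseteq> all_edges n" "x \<in> {2..n}" "u \<in> {2..n}"
  shows "adj (g \<inter> rest n) x u = adj g x u"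
proof -
  have "{x, u} \<notin> star n" using assms unfolding star_def by (auto simp: doubleton_eq_iff)
  then show ?thesis using g unfolding adj_def rest_def by auto
qed

lemma Asum_rest:
  assumes g: "g \<subseteq> all_edges n"
  shows "Asum n (g \<inter> rest n) = Asum n g"
  unfolding Asum_def using adj_rest[OF g] by simp

lemma sum_deg_V:
  assumes g: "g \<subseteq> all_edges n" and n: "n \<ge> 2"
  shows "(\<Sum>x\<in>{2..n}. real (deg g x)) = real (deg g 1) + Asum n g"
proof -
  have n1: "n \<ge> 1" using n by simp
  have "(\<Sum>x\<in>{2..n}. real (deg g x)) = (\<Sum>x\<in>{2..n}. adj g x 1 + (\<Sum>u\<in>{2..n}. adj g x u))"
    by (intro sum.cong refl) (simp add: deg_sum_V[OF g n1])
  also have "\<dots> = (\<Sum>x\<in>{2..n}. adj g 1 x) + Asum n g"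
    by (simp add: sum.distrib Asum_def adj_sym)
  also have "(\<Sum>x\<in>{2..n}. adj g 1 x) = real (deg g 1)"
    using deg_sum_V[OF g n1, of 1] adj_self[OF g] by simp
  finally show ?thesis .
qed

definition phi :: "nat \<Rightarrow> real" where "phi k = (if k = 0 then 1 else 2)"
definition psi :: "nat \<Rightarrow> real" where "psi k = (if k = 0 then 0 else 1 / real k)"

lemma Ub_split:
  assumes g: "g \<subseteq> all_edges n" and n: "n \<ge> 2"
  shows "Ub g n = phi (card (g \<inter> star n)) + psi (card (g \<inter> star n)) * Asum n (g \<inter> rest n)"
  unfolding Ub_def phi_def psi_def Asum_rest[OF g] sum_deg_V[OF g n] deg1_star[OF g]
  by (simp add: field_simps)

lemma E_Asum:
  assumes n: "n \<ge> 2"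
  shows "(\<Sum>g\<in>Pow (all_edges n). wt p (all_edges n) g * Asum n g) = real (n - 1) * real (n - 2) * p"
proof -
  have "(\<Sum>g\<in>Pow (all_edges n). wt p (all_edges n) g * Asum n g) =
     (\<Sum>x\<in>{2..n}. \<Sum>u\<in>{2..n}. \<Sum>g\<in>Pow (all_edges n). wt p (all_edges n) g * adj g x u)"
    unfolding Asum_def by (simp add: sum_distrib_left sum.swap[of _ "Pow (all_edges n)"])
  also have "\<dots> = (\<Sum>x\<in>{2..n}. \<Sum>u\<in>{2..n}. if x = u then 0 else p)"
  proof (intro sum.cong refl)
    fix x u assume xu: "x \<in> {2..n}" "u \<in> {2..n}"
    show "(\<Sum>g\<in>Pow (all_edges n). wt p (all_edges n) g * adj g x u) = (if x = u then 0 else p)"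
    proof (cases "x = u")
      case True
      then show ?thesis using adj_self[of _ n] by simp
    next
      case False
      have "{x, u} \<in> all_edges n"
        by (rule edge_mem) (use xu False in auto)
      then have "(\<Sum>g\<in>Pow (all_edges n). wt p (all_edges n) g * (if {x, u} \<in> g then 1 else 0)) = p"
        by (rule wt_edge[OF finite_all_edges])
      then show ?thesis using False by (simp add: adj_def)
    qed
  qed
  also have "\<dots> = (\<Sum>x\<in>{2..n}. p * real (n - 2))"
  proof (intro sum.cong refl)
    fix x assume x: "x \<in> {2..n}"
    have "(\<Sum>u\<in>{2..n}. if x = u then 0 else p) = (\<Sum>u\<in>{2..n} - {x}. p)"
      using x by (simp add: sum.If_cases Diff_eq Int_commute)
    also have "\<dots> = p * real (n - 2)" using x by (simp add: card_Diff_singleton)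
    finally show "(\<Sum>u\<in>{2..n}. if x = u then 0 else p) = p * real (n - 2)" .
  qed
  finally show ?thesis using n by simp
qed



definition bw :: "nat \<Rightarrow> real \<Rightarrow> nat \<Rightarrow> real" where
  "bw m p k = real (m choose k) * p ^ k * (1 - p) ^ (m - k)"

lemma wt_card_group:
  assumes "finite S"
  shows "(\<Sum>h\<in>Pow S. wt p S h * f (card h)) = (\<Sum>k\<le>card S. bw (card S) p k * f k)"
proof -
  have "(\<Sum>h\<in>Pow S. wt p S h * f (card h)) =
        (\<Sum>k\<le>card S. \<Sum>h\<in>{h\<in>Pow S. card h = k}. wt p S h * f (card h))"
    by (rule sum.group[symmetric]) (use assms card_mono in auto)
  also have "\<dots> = (\<Sum>k\<le>card S. bw (card S) p k * f k)"
  proof (intro sum.cong refl)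
    fix k
    have "(\<Sum>h\<in>{h\<in>Pow S. card h = k}. wt p S h * f (card h)) =
          (\<Sum>h\<in>{h\<in>Pow S. card h = k}. p ^ k * (1 - p) ^ (card S - k) * f k)"
      by (intro sum.cong refl) (auto simp: wt_def)
    also have "\<dots> = real (card {h. h \<subseteq> S \<and> card h = k}) * (p ^ k * (1 - p) ^ (card S - k) * f k)"
      by simp
    also have "\<dots> = bw (card S) p k * f k"
      using n_subsets[OF assms, of k] by (simp add: bw_def)
    finally show "(\<Sum>h\<in>{h\<in>Pow S. card h = k}. wt p S h * f (card h)) = bw (card S) p k * f k" .
  qed
  finally show ?thesis .
qed

lemma bw_sum: "(\<Sum>k\<le>m. bw m p k) = 1"
  using binomial_ring[of p "1 - p" m] by (simp add: bw_def)

lemma bw_nonneg: "0 \<le> p \<Longrightarrow> p \<le> 1 \<Longrightarrow> 0 \<le> bw m p k"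
  by (simp add: bw_def)

lemma bw_shift1: "bw m p k / real (Suc k) * (real (Suc m) * p) = bw (Suc m) p (Suc k)"
proof -
  have c: "real (Suc k) * real (Suc m choose Suc k) = real (Suc m) * real (m choose k)"
    using Suc_times_binomial[of k m] by (metis of_nat_mult)
  have c': "real (Suc m choose Suc k) = real (m choose k) * real (Suc m) / real (Suc k)"
    using c by (simp add: field_simps del: of_nat_Suc binomial_Suc_Suc)
  have "bw (Suc m) p (Suc k) = real (Suc m choose Suc k) * p ^ Suc k * (1 - p) ^ (m - k)"
    unfolding bw_def by simp
  also have "\<dots> = bw m p k / real (Suc k) * (real (Suc m) * p)"
    unfolding c' bw_def by (simp add: field_simps del: of_nat_Suc binomial_Suc_Suc)
  finally show ?thesis by simp
qed

lemma bw_inv1: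
  assumes "0 < p"
  shows "(\<Sum>k\<le>m. bw m p k / real (Suc k)) = (1 - (1 - p) ^ Suc m) / (real (Suc m) * p)"
proof -
  have "(\<Sum>k\<le>m. bw m p k / real (Suc k)) * (real (Suc m) * p) = (\<Sum>k\<le>m. bw (Suc m) p (Suc k))"
    by (simp only: sum_distrib_right bw_shift1)
  also have "\<dots> = (\<Sum>k\<le>Suc m. bw (Suc m) p k) - bw (Suc m) p 0"
    by (simp add: sum.atMost_Suc_shift del: sum.atMost_Suc)
  also have "\<dots> = 1 - (1 - p) ^ Suc m" unfolding bw_sum by (simp add: bw_def)
  finally have X: "(\<Sum>k\<le>m. bw m p k / real (Suc k)) * (real (Suc m) * p) = 1 - (1 - p) ^ Suc m" .
  have cpos: "real (Suc m) * p > 0" using assms by simp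
  show ?thesis using X cpos assms by (simp only: eq_divide_eq) simp
qed

lemma bw_inv2:
  assumes "0 < p" "p \<le> 1"
  shows "(\<Sum>k\<le>m. bw m p k / (real (Suc k) * real (Suc (Suc k)))) \<le> 1 / (real (Suc m) * real (Suc (Suc m)) * p ^ 2)"
proof -
  have e: "bw m p k / (real (Suc k) * real (Suc (Suc k))) * (real (Suc m) * real (Suc (Suc m)) * p ^ 2)
      = bw (Suc (Suc m)) p (Suc (Suc k))" for k
  proof -
    have "bw m p k / (real (Suc k) * real (Suc (Suc k))) * (real (Suc m) * real (Suc (Suc m)) * p ^ 2) =
      (bw m p k / real (Suc k) * (real (Suc m) * p)) / real (Suc (Suc k)) * (real (Suc (Suc m)) * p)"
      by (simp add: field_simps power2_eq_square)
    also have "\<dots> = bw (Suc (Suc m)) p (Suc (Suc k))" by (simp only: bw_shift1)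
    finally show ?thesis .
  qed
  have "(\<Sum>k\<le>m. bw m p k / (real (Suc k) * real (Suc (Suc k)))) * (real (Suc m) * real (Suc (Suc m)) * p ^ 2)
      = (\<Sum>k\<le>m. bw (Suc (Suc m)) p (Suc (Suc k)))"
    by (simp only: sum_distrib_right e)
  also have "\<dots> \<le> (\<Sum>k\<le>Suc (Suc m). bw (Suc (Suc m)) p k)"
    using bw_nonneg[of p "Suc (Suc m)"] assms by (simp add: sum.atMost_Suc_shift del: sum.atMost_Suc)
  also have "\<dots> = 1" by (rule bw_sum)
  finally have X: "(\<Sum>k\<le>m. bw m p k / (real (Suc k) * real (Suc (Suc k)))) * (real (Suc m) * real (Suc (Suc m)) * p ^ 2) \<le> 1" .
  have cpos: "real (Suc m) * real (Suc (Suc m)) * p ^ 2 > 0" using assms by simp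
  show ?thesis using X cpos by (simp add: le_divide_eq)
qed



definition Rg :: "nat \<Rightarrow> nat set set \<Rightarrow> real" where
  "Rg n g = enn2real (exp_return n g)"

definition Fn :: "nat \<Rightarrow> real \<Rightarrow> real" where
  "Fn n p = (\<Sum>g\<in>Pow (all_edges n). wt p (all_edges n) g * Rg n g)"

definition EU :: "nat \<Rightarrow> real \<Rightarrow> real" where
  "EU n p = (\<Sum>g\<in>Pow (all_edges n). wt p (all_edges n) g * Ub g n)"

lemma Rg_props:
  assumes "g \<subseteq> all_edges n" "n \<ge> 2"
  shows "exp_return n g = ennreal (Rg n g)" "1 \<le> Rg n g" "Rg n g \<le> Ub g n" "good g n \<Longrightarrow> Rg n g = Ub g n"
proof -
  obtain r where r: "exp_return n g = ennreal r" "1 \<le> r" "r \<le> Ub g n" "good g n \<longrightarrow> r = Ub g n"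
    using exp_return_eq[OF assms] by blast
  have "Rg n g = r" using r(1,2) by (simp add: Rg_def)
  then show "exp_return n g = ennreal (Rg n g)" "1 \<le> Rg n g" "Rg n g \<le> Ub g n" "good g n \<Longrightarrow> Rg n g = Ub g n"
    using r by auto
qed

lemma inv_bound: assumes "(x::real) \<ge> 1" shows "1/x \<le> 1/(x+1) + 3/((x+1)*(x+2))"
proof -
  have xp: "x \<noteq> 0" "x + 1 \<noteq> 0" using assms by auto
  have d: "1/x - 1/(x+1) = (1*(x+1) - 1*x)/(x*(x+1))" by (rule diff_frac_eq[OF xp])
  have e: "1/x = 1/(x+1) + 1/(x*(x+1))" using d by simp
  have "(x+1)*(x+2) \<le> (x+1)*(3*x)" using assms by (intro mult_left_mono) auto
  then have "3/(3*(x*(x+1))) \<le> 3/((x+1)*(x+2))"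
    using assms by (intro frac_le) (auto simp: algebra_simps)
  then show ?thesis unfolding e by simp
qed

lemma ident2: "(n::real) > 0 \<Longrightarrow> m > 0 \<Longrightarrow> (p::real) > 0 \<Longrightarrow> (1/(n*p) + 3/(n*m*p^2))*(a*b*p) = a*b/n + 3*(a*b/(n*m))/p"
  by (simp add: field_simps power2_eq_square)

lemma Ub_le:
  assumes g: "g \<subseteq> all_edges n" and n: "n \<ge> 2"
  shows "Ub g n \<le> real n ^ 2"
proof (cases "deg g 1 = 0")
  case True
  have "1 \<le> real n ^ 2" using n by (intro one_le_power) simp
  then show ?thesis using True by (simp add: Ub_def)
next
  case False
  have s: "(\<Sum>x\<in>{2..n}. real (deg g x)) \<le> (\<Sum>x\<in>{2..n}. real n)"
    by (intro sum_mono) (use deg_le[OF g] in auto)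
  have "(\<Sum>x\<in>{2..n}. real (deg g x)) / real (deg g 1) \<le> (\<Sum>x\<in>{2..n}. real (deg g x))"
  proof -
    have "(\<Sum>x\<in>{2..n}. real (deg g x)) / real (deg g 1) \<le> (\<Sum>x\<in>{2..n}. real (deg g x)) / 1"
      by (rule divide_left_mono) (use False in \<open>auto intro: sum_nonneg\<close>)
    then show ?thesis by simp
  qed
  also have "\<dots> \<le> real (n - 1) * real n" using s n by simp
  finally have "Ub g n \<le> 1 + real (n - 1) * real n" using False by (simp add: Ub_def)
  also have "\<dots> \<le> real n ^ 2" using n by (simp add: power2_eq_square of_nat_diff algebra_simps)
  finally show ?thesis .
qed

lemma Ub_nonneg:
  "0 \<le> Ub g n"
  by (simp add: Ub_def add_nonneg_nonneg divide_nonneg_nonneg sum_nonneg)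

context
  fixes n :: nat and p :: real
  assumes n: "n \<ge> 2" and p0: "0 < p" and p1: "p \<le> 1"
begin

lemma S_props: "star n \<subseteq> all_edges n" "rest n \<subseteq> all_edges n" "star n \<inter> rest n = {}"
  "card (star n) = n - 1" "finite (star n)"
  using star_sub card_star finite_subset[OF star_sub finite_all_edges] unfolding rest_def by auto

definition beta :: real where
  "beta = (\<Sum>k\<le>n - 1. bw (n - 1) p k * psi k)"

lemma EU_eq:
  "EU n p = (\<Sum>k\<le>n - 1. bw (n - 1) p k * phi k) + beta * (real (n - 1) * real (n - 2) * p)"
proof -
  let ?E = "all_edges n" and ?S = "star n" and ?T = "rest n"
  have "EU n p = (\<Sum>g\<in>Pow ?E. wt p ?E g * phi (card (g \<inter> ?S))) +
      (\<Sum>g\<in>Pow ?E. wt p ?E g * (psi (card (g \<inter> ?S)) * Asum n (g \<inter> ?T)))"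
    unfolding EU_def sum.distrib[symmetric]
    by (intro sum.cong refl) (simp add: Ub_split[OF _ n] distrib_left)
  also have "(\<Sum>g\<in>Pow ?E. wt p ?E g * phi (card (g \<inter> ?S))) = (\<Sum>a\<in>Pow ?S. wt p ?S a * phi (card a))"
    using wt_marg[OF finite_all_edges S_props(1), of p "\<lambda>a. phi (card a)"] by simp
  also have "\<dots> = (\<Sum>k\<le>n - 1. bw (n - 1) p k * phi k)"
    using wt_card_group[OF S_props(5), of p phi] S_props(4) by simp
  also have "(\<Sum>g\<in>Pow ?E. wt p ?E g * (psi (card (g \<inter> ?S)) * Asum n (g \<inter> ?T))) =
     (\<Sum>a\<in>Pow ?S. wt p ?S a * psi (card a)) * (\<Sum>b\<in>Pow ?T. wt p ?T b * Asum n b)"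
    using wt_prod2'[OF finite_all_edges S_props(1-3), of p "\<lambda>a. psi (card a)" "Asum n"] by simp
  also have "(\<Sum>a\<in>Pow ?S. wt p ?S a * psi (card a)) = beta"
    using wt_card_group[OF S_props(5), of p psi] S_props(4) by (simp add: beta_def)
  also have "(\<Sum>b\<in>Pow ?T. wt p ?T b * Asum n b) = (\<Sum>g\<in>Pow ?E. wt p ?E g * Asum n (g \<inter> ?T))"
    using wt_marg[OF finite_all_edges S_props(2), of p "Asum n"] by simp
  also have "\<dots> = (\<Sum>g\<in>Pow ?E. wt p ?E g * Asum n g)"
    by (intro sum.cong refl) (simp add: Asum_rest)
  also have "\<dots> = real (n - 1) * real (n - 2) * p" by (rule E_Asum[OF n])
  finally show ?thesis .
qed

lemma bw_nn: "0 \<le> bw m p k" using bw_nonneg p0 p1 by simp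

lemma inv1_n: "(\<Sum>k\<le>n - 1. bw (n - 1) p k / real (Suc k)) = (1 - (1 - p) ^ n) / (real n * p)"
  using bw_inv1[OF p0, of "n - 1"] n by simp

lemma beta_nonneg: "0 \<le> beta"
  unfolding beta_def using bw_nn by (auto intro!: sum_nonneg simp: psi_def)

lemma beta_le1: "beta \<le> 2 / (real n * p)"
proof -
  have "beta \<le> (\<Sum>k\<le>n - 1. bw (n - 1) p k * (2 / real (Suc k)))"
    unfolding beta_def
    by (intro sum_mono mult_left_mono) (auto simp: psi_def bw_nn field_simps)
  also have "\<dots> = 2 * ((1 - (1 - p) ^ n) / (real n * p))"
    unfolding inv1_n[symmetric] sum_distrib_left by (intro sum.cong refl) (simp add: field_simps)
  also have "\<dots> \<le> 2 / (real n * p)"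
    using p0 p1 n by (simp add: divide_right_mono)
  finally show ?thesis .
qed

lemma beta_le2: "beta \<le> 1 / (real n * p) + 3 / (real n * real (Suc n) * p ^ 2)"
proof -
  have "beta \<le> (\<Sum>k\<le>n - 1. bw (n - 1) p k / real (Suc k) + 3 * (bw (n - 1) p k / (real (Suc k) * real (Suc (Suc k)))))"
    unfolding beta_def
  proof (intro sum_mono)
    fix k
    have "psi k \<le> 1 / real (Suc k) + 3 / (real (Suc k) * real (Suc (Suc k)))"
    proof (cases "k = 0")
      case True then show ?thesis by (simp add: psi_def)
    next
      case False
      then have "1 / real k \<le> 1 / (real k + 1) + 3 / ((real k + 1) * (real k + 2))"
        by (intro inv_bound) simp
      then have "1 / real k \<le> 1 / real (Suc k) + 3 / (real (Suc k) * real (Suc (Suc k)))"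
        by (simp add: add.commute)
      then show ?thesis using False by (simp add: psi_def)
    qed
    then have "bw (n - 1) p k * psi k \<le> bw (n - 1) p k * (1 / real (Suc k) + 3 / (real (Suc k) * real (Suc (Suc k))))"
      by (rule mult_left_mono) (rule bw_nn)
    then show "bw (n - 1) p k * psi k \<le> bw (n - 1) p k / real (Suc k) + 3 * (bw (n - 1) p k / (real (Suc k) * real (Suc (Suc k))))"
      by (simp add: field_simps)
  qed
  also have "\<dots> = (1 - (1 - p) ^ n) / (real n * p) + 3 * (\<Sum>k\<le>n - 1. bw (n - 1) p k / (real (Suc k) * real (Suc (Suc k))))"
    unfolding inv1_n[symmetric] by (simp add: sum.distrib sum_distrib_left)
  also have "\<dots> \<le> 1 / (real n * p) + 3 * (1 / (real n * real (Suc n) * p ^ 2))"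
  proof (intro add_mono mult_left_mono)
    show "(1 - (1 - p) ^ n) / (real n * p) \<le> 1 / (real n * p)"
      using p0 p1 n by (simp add: divide_right_mono)
    show "(\<Sum>k\<le>n - 1. bw (n - 1) p k / (real (Suc k) * real (Suc (Suc k)))) \<le> 1 / (real n * real (Suc n) * p ^ 2)"
      using bw_inv2[OF p0 p1, of "n - 1"] n by simp
  qed simp
  finally show ?thesis by simp
qed

lemma beta_ge: "beta \<ge> (1 - (1 - p) ^ n) / (real n * p) - (1 - p) ^ (n - 1)"
proof -
  have "(\<Sum>k\<le>n - 1. bw (n - 1) p k / real (Suc k)) - bw (n - 1) p 0 \<le> beta"
  proof -
    have "(\<Sum>k\<le>n - 1. bw (n - 1) p k / real (Suc k)) = bw (n - 1) p 0 + (\<Sum>k\<in>{1..n - 1}. bw (n - 1) p k / real (Suc k))"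
      by (simp add: atMost_atLeast0 sum.atLeast_Suc_atMost)
    moreover have "beta = (\<Sum>k\<in>{1..n - 1}. bw (n - 1) p k * psi k)"
      unfolding beta_def by (simp add: atMost_atLeast0 sum.atLeast_Suc_atMost psi_def)
    moreover have "(\<Sum>k\<in>{1..n - 1}. bw (n - 1) p k / real (Suc k)) \<le> (\<Sum>k\<in>{1..n - 1}. bw (n - 1) p k * psi k)"
      by (intro sum_mono) (auto simp: psi_def bw_nn field_simps intro!: mult_left_mono)
    ultimately show ?thesis by linarith
  qed
  then show ?thesis unfolding inv1_n by (simp add: bw_def)
qed

lemma EU_upper1: "EU n p \<le> 2 * real n"
proof -
  have phi: "(\<Sum>k\<le>n - 1. bw (n - 1) p k * phi k) \<le> 2"
  proof -
    have "(\<Sum>k\<le>n - 1. bw (n - 1) p k * phi k) \<le> (\<Sum>k\<le>n - 1. bw (n - 1) p k * 2)"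
      by (intro sum_mono mult_left_mono) (auto simp: phi_def bw_nn)
    also have "\<dots> = 2" using bw_sum by (simp add: sum_distrib_right[symmetric])
    finally show ?thesis .
  qed
  have "beta * (real (n - 1) * real (n - 2) * p) \<le> 2 / (real n * p) * (real (n - 1) * real (n - 2) * p)"
    by (rule mult_right_mono[OF beta_le1]) (use p0 in simp)
  also have "\<dots> = 2 * real (n - 1) * real (n - 2) / real n" using p0 by (simp add: field_simps)
  also have "\<dots> \<le> 2 * real (n - 2)"
    using n by (simp add: field_simps)
  finally have "beta * (real (n - 1) * real (n - 2) * p) \<le> 2 * real (n - 2)" .
  then show ?thesis using EU_eq phi n by (simp add: of_nat_diff)
qed

lemma EU_upper2: "EU n p \<le> 2 + real n + 3 / p"
proof -
  have phi: "(\<Sum>k\<le>n - 1. bw (n - 1) p k * phi k) \<le> 2"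
  proof -
    have "(\<Sum>k\<le>n - 1. bw (n - 1) p k * phi k) \<le> (\<Sum>k\<le>n - 1. bw (n - 1) p k * 2)"
      by (intro sum_mono mult_left_mono) (auto simp: phi_def bw_nn)
    also have "\<dots> = 2" using bw_sum by (simp add: sum_distrib_right[symmetric])
    finally show ?thesis .
  qed
  have "beta * (real (n - 1) * real (n - 2) * p) \<le>
      (1 / (real n * p) + 3 / (real n * real (Suc n) * p ^ 2)) * (real (n - 1) * real (n - 2) * p)"
    by (rule mult_right_mono[OF beta_le2]) (use p0 in simp)
  also have "\<dots> = real (n - 1) * real (n - 2) / real n + 3 * (real (n - 1) * real (n - 2) / (real n * real (Suc n))) / p"
    by (rule ident2) (use p0 n in auto)
  also have "\<dots> \<le> real n + 3 * 1 / p"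
  proof (intro add_mono divide_right_mono mult_left_mono)
    show "real (n - 1) * real (n - 2) / real n \<le> real n"
      using n by (simp add: field_simps of_nat_diff; (simp add: algebra_simps)?)
    have a: "real (n - 1) * real (n - 2) \<le> real n * real (Suc n)" by (intro mult_mono) auto
    have b: "0 < real n * real (Suc n)" using n by simp
    show "real (n - 1) * real (n - 2) / (real n * real (Suc n)) \<le> 1"
      using a b by (simp add: pos_divide_le_eq)
  qed (use p0 in auto)
  finally show ?thesis using EU_eq phi by simp
qed

lemma EU_lower: "EU n p \<ge> real (n - 1) * real (n - 2) / real n * (1 - (1 - p) ^ n) - real n ^ 2 * (1 - p) ^ (n - 1)"
proof -
  have phi: "0 \<le> (\<Sum>k\<le>n - 1. bw (n - 1) p k * phi k)"
    by (intro sum_nonneg mult_nonneg_nonneg) (auto simp: phi_def bw_nn)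
  have c: "0 \<le> real (n - 1) * real (n - 2) * p" using p0 by simp
  have "((1 - (1 - p) ^ n) / (real n * p) - (1 - p) ^ (n - 1)) * (real (n - 1) * real (n - 2) * p)
      \<le> beta * (real (n - 1) * real (n - 2) * p)"
    by (rule mult_right_mono[OF beta_ge c])
  moreover have "((1 - (1 - p) ^ n) / (real n * p) - (1 - p) ^ (n - 1)) * (real (n - 1) * real (n - 2) * p)
     = real (n - 1) * real (n - 2) / real n * (1 - (1 - p) ^ n) - real (n - 1) * real (n - 2) * p * (1 - p) ^ (n - 1)"
    using p0 n by (simp add: field_simps)
  moreover have "real (n - 1) * real (n - 2) * p * (1 - p) ^ (n - 1) \<le> real n ^ 2 * (1 - p) ^ (n - 1)"
  proof (rule mult_right_mono)
    have "real (n - 1) * real (n - 2) * p \<le> real n * real n * 1"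
      by (intro mult_mono) (use p0 p1 in auto)
    then show "real (n - 1) * real (n - 2) * p \<le> real n ^ 2" by (simp add: power2_eq_square)
  qed (use p1 in simp)
  ultimately show ?thesis using EU_eq phi by linarith
qed

end



definition Pw :: "nat \<Rightarrow> nat \<Rightarrow> nat set set" where
  "Pw v w = {{v, w}, {w, 1}}"

definition Bv :: "nat \<Rightarrow> nat \<Rightarrow> nat set set \<Rightarrow> real" where
  "Bv n v g = (\<Prod>w\<in>{2..n} - {v}. if g \<inter> Pw v w = Pw v w then 0 else 1)"

lemma Bv_nonneg: "0 \<le> Bv n v g"
  unfolding Bv_def by (intro prod_nonneg) auto

lemma not_good_le:
  assumes "\<not> good g n"
  shows "1 \<le> (\<Sum>v\<in>{2..n}. Bv n v g)"
proof -
  obtain v where v: "v \<in> {2..n}" "{1, v} \<notin> g" "\<not> (\<exists>w\<in>{2..n}. {v, w} \<in> g \<and> {w, 1} \<in> g)"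
    using assms unfolding good_def by blast
  have "Bv n v g = 1"
    unfolding Bv_def
  proof (intro prod.neutral ballI)
    fix w assume w: "w \<in> {2..n} - {v}"
    have "g \<inter> Pw v w \<noteq> Pw v w" using v w unfolding Pw_def by auto
    then show "(if g \<inter> Pw v w = Pw v w then 0 else 1) = (1::real)" by simp
  qed
  moreover have "Bv n v g \<le> (\<Sum>v\<in>{2..n}. Bv n v g)"
    by (rule member_le_sum) (use v Bv_nonneg in auto)
  ultimately show ?thesis by simp
qed

lemma sum_wt_minus_top:
  assumes "finite P"
  shows "(\<Sum>a\<in>Pow P. wt p P a * (if a = P then 0 else 1)) = 1 - p ^ card P"
proof -
  have "(\<Sum>a\<in>Pow P. wt p P a * (if a = P then 0 else 1)) = (\<Sum>a\<in>Pow P. wt p P a) - wt p P P"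
  proof -
    have "(\<Sum>a\<in>Pow P. wt p P a * (if a = P then 0 else 1)) = (\<Sum>a\<in>Pow P. wt p P a - (if a = P then wt p P a else 0))"
      by (intro sum.cong refl) auto
    also have "\<dots> = (\<Sum>a\<in>Pow P. wt p P a) - wt p P P"
      using assms by (simp add: sum_subtractf)
    finally show ?thesis .
  qed
  then show ?thesis using wt_sum1[OF assms, of p] by (simp add: wt_def)
qed

context
  fixes n :: nat and p :: real
  assumes n: "n \<ge> 2" and p0: "0 < p" and p1: "p \<le> 1"
begin

lemma wt_nn: "0 \<le> wt p S g" using wt_nonneg[of p S g] p0 p1 by simp

lemma E_Bv:
  assumes v: "v \<in> {2..n}"
  shows "(\<Sum>g\<in>Pow (all_edges n). wt p (all_edges n) g * Bv n v g) = (1 - p ^ 2) ^ (n - 2)"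
proof -
  have sub: "Pw v w \<subseteq> all_edges n" if "w \<in> {2..n} - {v}" for w
    using that v edge_mem[of v n w] edge_mem[of w n 1] unfolding Pw_def by auto
  have disj: "Pw v w \<inter> Pw v w' = {}" if "w \<in> {2..n} - {v}" "w' \<in> {2..n} - {v}" "w \<noteq> w'" for w w'
    using that v unfolding Pw_def by (auto simp: doubleton_eq_iff)
  have "(\<Sum>g\<in>Pow (all_edges n). wt p (all_edges n) g * Bv n v g) =
    (\<Prod>w\<in>{2..n} - {v}. \<Sum>a\<in>Pow (Pw v w). wt p (Pw v w) a * (if a = Pw v w then 0 else 1))"
    unfolding Bv_def
    by (rule wt_prodI[of "{2..n} - {v}" "all_edges n" "Pw v" p "\<lambda>w a. if a = Pw v w then 0 else 1"])
       (use sub disj finite_all_edges in auto)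
  also have "\<dots> = (\<Prod>w\<in>{2..n} - {v}. 1 - p ^ 2)"
  proof (intro prod.cong refl)
    fix w assume w: "w \<in> {2..n} - {v}"
    have "card (Pw v w) = 2" using w v unfolding Pw_def by (auto simp: doubleton_eq_iff)
    then show "(\<Sum>a\<in>Pow (Pw v w). wt p (Pw v w) a * (if a = Pw v w then 0 else 1)) = 1 - p ^ 2"
      using sum_wt_minus_top[of "Pw v w" p] unfolding Pw_def by simp
  qed
  also have "\<dots> = (1 - p ^ 2) ^ (n - 2)" using v by (simp add: card_Diff_singleton numeral_2_eq_2)
  finally show ?thesis .
qed

lemma bad_prob:
  "(\<Sum>g\<in>Pow (all_edges n). wt p (all_edges n) g * (if good g n then 0 else 1)) \<le> real (n - 1) * (1 - p ^ 2) ^ (n - 2)"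
proof -
  have "(\<Sum>g\<in>Pow (all_edges n). wt p (all_edges n) g * (if good g n then 0 else 1)) \<le>
        (\<Sum>g\<in>Pow (all_edges n). wt p (all_edges n) g * (\<Sum>v\<in>{2..n}. Bv n v g))"
    by (intro sum_mono mult_left_mono) (use not_good_le Bv_nonneg wt_nn in \<open>auto intro: sum_nonneg\<close>)
  also have "\<dots> = (\<Sum>v\<in>{2..n}. \<Sum>g\<in>Pow (all_edges n). wt p (all_edges n) g * Bv n v g)"
    by (simp add: sum_distrib_left sum.swap[of _ "Pow (all_edges n)"])
  also have "\<dots> = (\<Sum>v\<in>{2..n}. (1 - p ^ 2) ^ (n - 2))"
    by (intro sum.cong refl) (rule E_Bv)
  also have "\<dots> = real (n - 1) * (1 - p ^ 2) ^ (n - 2)" by simp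
  finally show ?thesis .
qed


lemma Fn_le: "Fn n p \<le> EU n p"
  unfolding Fn_def EU_def
  by (intro sum_mono mult_left_mono) (use Rg_props(3) n wt_nn in auto)

lemma Fn_ge1: "1 \<le> Fn n p"
proof -
  have "(\<Sum>g\<in>Pow (all_edges n). wt p (all_edges n) g * 1) \<le> Fn n p"
    unfolding Fn_def
    by (intro sum_mono mult_left_mono) (use Rg_props(2) n wt_nn in auto)
  then show ?thesis using wt_sum1[OF finite_all_edges] by simp
qed

lemma Fn_ge: "Fn n p \<ge> EU n p - real n ^ 2 * (real (n - 1) * (1 - p ^ 2) ^ (n - 2))"
proof -
  have "EU n p - real n ^ 2 * (\<Sum>g\<in>Pow (all_edges n). wt p (all_edges n) g * (if good g n then 0 else 1))
      = (\<Sum>g\<in>Pow (all_edges n). wt p (all_edges n) g * (Ub g n - real n ^ 2 * (if good g n then 0 else 1)))"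
    unfolding EU_def by (simp add: sum_distrib_left sum_subtractf right_diff_distrib algebra_simps)
  also have "\<dots> \<le> Fn n p"
    unfolding Fn_def
  proof (intro sum_mono mult_left_mono)
    fix g assume g: "g \<in> Pow (all_edges n)"
    then have g': "g \<subseteq> all_edges n" by simp
    show "Ub g n - real n ^ 2 * (if good g n then 0 else 1) \<le> Rg n g"
      using Rg_props[OF g' n] Ub_le[OF g' n] by (cases "good g n") auto
  qed (rule wt_nn)
  finally have "EU n p - real n ^ 2 * (\<Sum>g\<in>Pow (all_edges n). wt p (all_edges n) g * (if good g n then 0 else 1)) \<le> Fn n p" .
  moreover have "real n ^ 2 * (\<Sum>g\<in>Pow (all_edges n). wt p (all_edges n) g * (if good g n then 0 else 1))
      \<le> real n ^ 2 * (real (n - 1) * (1 - p ^ 2) ^ (n - 2))"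
    by (intro mult_left_mono bad_prob) simp
  ultimately show ?thesis by linarith
qed

lemma exp_tau_Fn: "exp_tau n p = ennreal (Fn n p)"
proof -
  have "exp_tau n p = (\<Sum>g\<in>Pow (all_edges n). ennreal (wt p (all_edges n) g * Rg n g))"
    unfolding exp_tau_def
  proof (intro sum.cong refl)
    fix g assume "g \<in> Pow (all_edges n)"
    then have g: "g \<subseteq> all_edges n" by simp
    show "ennreal (gnp_prob n p g) * exp_return n g = ennreal (wt p (all_edges n) g * Rg n g)"
      unfolding Rg_props(1)[OF g n] gnp_prob_def wt_def[symmetric]
      by (rule ennreal_mult[symmetric]) (use Rg_props(2)[OF g n] wt_nn in auto)
  qed
  also have "\<dots> = ennreal (Fn n p)"
    unfolding Fn_def
  proof (rule sum_ennreal)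
    fix g assume "g \<in> Pow (all_edges n)"
    then have g: "g \<subseteq> all_edges n" by simp
    show "0 \<le> wt p (all_edges n) g * Rg n g"
      using Rg_props(2)[OF g n] wt_nn[of "all_edges n" g] by simp
  qed
  finally show ?thesis .
qed

end



lemma pow_lim:
  assumes "0 \<le> r" "r < 1" "0 \<le> c"
  shows "(\<lambda>m. (real m + c) ^ 2 * r ^ m) \<longlonglongrightarrow> 0"
proof -
  define s where "s = sqrt r"
  have s: "0 \<le> s" "s < 1" "r = s ^ 2" using assms by (auto simp: s_def real_sqrt_less_iff)
  have a: "(\<lambda>m. real m * s ^ m) \<longlonglongrightarrow> 0"
    using powser_times_n_limit_0[of s] s by simp
  have b: "(\<lambda>m. real m * r ^ m) \<longlonglongrightarrow> 0"
    using powser_times_n_limit_0[of r] assms by simp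
  have c: "(\<lambda>m. r ^ m) \<longlonglongrightarrow> 0" using LIMSEQ_realpow_zero assms by blast
  have d: "(\<lambda>m. (real m * s ^ m) ^ 2) \<longlonglongrightarrow> 0" using tendsto_power[OF a, of 2] by simp
  have e: "(\<lambda>m. real m ^ 2 * r ^ m) = (\<lambda>m. (real m * s ^ m) ^ 2)"
    by (rule ext) (simp add: s(3) power_mult_distrib power_mult[symmetric] mult.commute)
  have "(\<lambda>m. real m ^ 2 * r ^ m + 2 * c * (real m * r ^ m) + c ^ 2 * r ^ m) \<longlonglongrightarrow> 0 + 2 * c * 0 + c ^ 2 * 0"
    by (intro tendsto_add tendsto_mult tendsto_const b c) (use d e in simp)
  moreover have "(\<lambda>m. (real m + c) ^ 2 * r ^ m) = (\<lambda>m. real m ^ 2 * r ^ m + 2 * c * (real m * r ^ m) + c ^ 2 * r ^ m)"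
    by (rule ext) (simp add: power2_eq_square algebra_simps)
  ultimately show ?thesis by simp
qed

definition L2 :: "real \<Rightarrow> nat \<Rightarrow> real" where
  "L2 p n = (real n - 1) * (real n - 2) / real n ^ 2 * (1 - (1 - p) ^ n)
     - real n ^ 2 * (1 - p) ^ (n - 2) - real n ^ 2 * (1 - p ^ 2) ^ (n - 2)"

lemma L2_lim:
  assumes p0: "0 < p" and p1: "p \<le> 1"
  shows "L2 p \<longlonglongrightarrow> 1"
proof (rule LIMSEQ_offset[where k = 2])
  have q: "0 \<le> 1 - p" "1 - p < 1" using assms by auto
  have r: "0 \<le> 1 - p ^ 2" "1 - p ^ 2 < 1" using assms by (auto simp: power_le_one)
  have z: "(\<lambda>m. c / real (m + 2)) \<longlonglongrightarrow> 0" for c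
    using LIMSEQ_ignore_initial_segment[OF lim_const_over_n[of c], of 2] by simp
  have A: "(\<lambda>m. (1 - 1 / real (m + 2)) * (1 - 2 / real (m + 2))) \<longlonglongrightarrow> (1 - 0) * (1 - 0)"
    by (intro tendsto_mult tendsto_diff tendsto_const z)
  have Q: "(\<lambda>m. 1 - (1 - p) ^ (m + 2)) \<longlonglongrightarrow> 1 - 0"
    by (intro tendsto_diff tendsto_const LIMSEQ_ignore_initial_segment LIMSEQ_realpow_zero q)
  have B: "(\<lambda>m. (real m + 2) ^ 2 * (1 - p) ^ m) \<longlonglongrightarrow> 0" by (rule pow_lim) (use q in auto)
  have C: "(\<lambda>m. (real m + 2) ^ 2 * (1 - p ^ 2) ^ m) \<longlonglongrightarrow> 0" by (rule pow_lim) (use r in auto)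
  have "(\<lambda>m. (1 - 1 / real (m + 2)) * (1 - 2 / real (m + 2)) * (1 - (1 - p) ^ (m + 2))
     - (real m + 2) ^ 2 * (1 - p) ^ m - (real m + 2) ^ 2 * (1 - p ^ 2) ^ m) \<longlonglongrightarrow> (1 - 0) * (1 - 0) * (1 - 0) - 0 - 0"
    by (intro tendsto_diff tendsto_mult A Q B C)
  moreover have "L2 p (m + 2) = (1 - 1 / real (m + 2)) * (1 - 2 / real (m + 2)) * (1 - (1 - p) ^ (m + 2))
     - (real m + 2) ^ 2 * (1 - p) ^ m - (real m + 2) ^ 2 * (1 - p ^ 2) ^ m" for m
  proof -
    have pos: "real m + 2 > 0" by simp
    have "(real (m + 2) - 1) * (real (m + 2) - 2) / real (m + 2) ^ 2 = (1 - 1 / real (m + 2)) * (1 - 2 / real (m + 2))"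
      using pos by (simp add: field_simps power2_eq_square)
    then show ?thesis unfolding L2_def by (simp add: add.commute)
  qed
  ultimately show "(\<lambda>m. L2 p (m + 2)) \<longlonglongrightarrow> 1" by simp
qed

lemma Fn_over_n_lower:
  assumes n: "n \<ge> 2" and p0: "0 < p" and p1: "p \<le> 1"
  shows "L2 p n \<le> Fn n p / real n"
proof -
  let ?q = "1 - p" and ?r = "1 - p ^ 2"
  have q: "0 \<le> ?q" "?q \<le> 1" using p0 p1 by auto
  have r: "0 \<le> ?r" using p0 p1 by (simp add: power_le_one)
  have npos: "real n > 0" using n by simp
  have "Fn n p \<ge> real (n - 1) * real (n - 2) / real n * (1 - ?q ^ n) - real n ^ 2 * ?q ^ (n - 1)
        - real n ^ 2 * (real (n - 1) * ?r ^ (n - 2))"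
    using Fn_ge[OF n p0 p1] EU_lower[OF n p0 p1] by linarith
  moreover have "real n ^ 2 * ?q ^ (n - 1) \<le> real n ^ 3 * ?q ^ (n - 2)"
  proof (intro mult_mono)
    show "real n ^ 2 \<le> real n ^ 3" using n by (intro power_increasing) auto
    show "?q ^ (n - 1) \<le> ?q ^ (n - 2)" using q by (intro power_decreasing) auto
  qed (use q in auto)
  moreover have "real n ^ 2 * (real (n - 1) * ?r ^ (n - 2)) \<le> real n ^ 3 * ?r ^ (n - 2)"
  proof -
    have "real n ^ 2 * real (n - 1) \<le> real n ^ 3"
      using n by (simp add: power3_eq_cube power2_eq_square)
    then show ?thesis using r by (simp add: mult.assoc[symmetric] mult_right_mono)
  qed
  ultimately have "Fn n p \<ge> real (n - 1) * real (n - 2) / real n * (1 - ?q ^ n) - real n ^ 3 * ?q ^ (n - 2)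
        - real n ^ 3 * ?r ^ (n - 2)" by linarith
  then have "Fn n p / real n \<ge> (real (n - 1) * real (n - 2) / real n * (1 - ?q ^ n) - real n ^ 3 * ?q ^ (n - 2)
        - real n ^ 3 * ?r ^ (n - 2)) / real n"
    using npos by (simp add: divide_right_mono)
  also have "(real (n - 1) * real (n - 2) / real n * (1 - ?q ^ n) - real n ^ 3 * ?q ^ (n - 2)
        - real n ^ 3 * ?r ^ (n - 2)) / real n = L2 p n"
    unfolding L2_def using n npos by (simp add: of_nat_diff field_simps power2_eq_square power3_eq_cube)
  finally show ?thesis .
qed

lemma Fn_over_n_upper:
  assumes n: "n \<ge> 2" and p0: "0 < p" and p1: "p \<le> 1"
  shows "Fn n p / real n \<le> 1 + (2 + 3 / p) / real n"
proof -
  have "Fn n p \<le> 2 + real n + 3 / p" using Fn_le[OF n p0 p1] EU_upper2[OF n p0 p1] by linarith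
  then have "Fn n p / real n \<le> (2 + real n + 3 / p) / real n" using n by (simp add: divide_right_mono)
  also have "\<dots> = 1 + (2 + 3 / p) / real n" using n by (simp add: field_simps)
  finally show ?thesis .
qed

lemma Fn_over_n_bound:
  assumes n: "n \<ge> 2" and p0: "0 < p" and p1: "p \<le> 1"
  shows "0 \<le> Fn n p / real n" "Fn n p / real n \<le> 2"
proof -
  show "0 \<le> Fn n p / real n" using Fn_ge1[OF n p0 p1] by simp
  have "Fn n p \<le> 2 * real n" using Fn_le[OF n p0 p1] EU_upper1[OF n p0 p1] by linarith
  then show "Fn n p / real n \<le> 2" using n by (simp add: divide_le_eq mult.commute)
qed

lemma Fn_lim:
  assumes p0: "0 < p" and p1: "p \<le> 1"
  shows "(\<lambda>n. Fn n p / real n) \<longlonglongrightarrow> 1"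
proof (rule tendsto_sandwich[of "L2 p" _ _ "\<lambda>n. 1 + (2 + 3 / p) / real n"])
  show "\<forall>\<^sub>F n in sequentially. L2 p n \<le> Fn n p / real n"
    by (rule eventually_mono[OF eventually_ge_at_top[of 2]]) (rule Fn_over_n_lower[OF _ p0 p1])
  show "\<forall>\<^sub>F n in sequentially. Fn n p / real n \<le> 1 + (2 + 3 / p) / real n"
    by (rule eventually_mono[OF eventually_ge_at_top[of 2]]) (rule Fn_over_n_upper[OF _ p0 p1])
  show "L2 p \<longlonglongrightarrow> 1" by (rule L2_lim[OF p0 p1])
  show "(\<lambda>n. 1 + (2 + 3 / p) / real n) \<longlonglongrightarrow> 1"
    using tendsto_add[OF tendsto_const lim_const_over_n[of "2 + 3 / p"], of 1] by simp
qed


lemma Fn_meas_borel: "(\<lambda>p. Fn n p) \<in> borel_measurable borel"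
  unfolding Fn_def wt_def by measurable

theorem theorem1:
  fixes M :: "real measure" and A :: "real set"
  assumes "prob_space M"
    and "sets M = sets (restrict_space borel {0<..1})"
    and "A \<in> sets M"
  shows "(\<lambda>n. mu_tilt M n A) \<longlonglongrightarrow> emeasure M A"
proof -
  interpret prob_space M by (rule assms(1))
  have sp: "space M = {0<..1}"
    using sets_eq_imp_space_eq[OF assms(2)] by simp
  have measM: "(\<lambda>p. Fn n p) \<in> borel_measurable M" for n
    using measurable_restrict_space1[OF Fn_meas_borel[of n], of "{0<..1}"]
    by (subst measurable_cong_sets[OF assms(2) refl])
  define I where "I n B = (\<integral>p. Fn n p / real n * indicator B p \<partial>M)" for n B
  have meas_s: "(\<lambda>p. Fn n p / real n * indicator B p) \<in> borel_measurable M" if B: "B \<in> sets M" for n B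
    using measM[of n] B by measurable
  have conv: "(\<lambda>n. I n B) \<longlonglongrightarrow> measure M B" if B: "B \<in> sets M" for B
  proof -
    have "(\<lambda>i. \<integral>p. Fn (i + 2) p / real (i + 2) * indicator B p \<partial>M) \<longlonglongrightarrow> (\<integral>p. indicator B p \<partial>M)"
    proof (rule integral_dominated_convergence[where w = "\<lambda>_. 2" and s = "\<lambda>i p. Fn (i + 2) p / real (i + 2) * indicator B p" and f = "indicator B"])
      show "(indicator B :: real \<Rightarrow> real) \<in> borel_measurable M" using B by measurable
      show "\<And>t. (\<lambda>p. Fn (t + 2) p / real (t + 2) * indicator B p) \<in> borel_measurable M" by (rule meas_s[OF B])
      show "integrable M (\<lambda>_. 2::real)" by simp
      show "AE p in M. (\<lambda>i. Fn (i + 2) p / real (i + 2) * indicator B p) \<longlonglongrightarrow> indicator B p"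
      proof (rule AE_I2)
        fix p assume "p \<in> space M"
        then have p: "0 < p" "p \<le> 1" using sp by auto
        show "(\<lambda>i. Fn (i + 2) p / real (i + 2) * indicator B p) \<longlonglongrightarrow> indicator B p"
          using tendsto_mult_right[OF LIMSEQ_ignore_initial_segment[OF Fn_lim[OF p], of 2], of "indicator B p"] by simp
      qed
      show "AE p in M. norm (Fn (i + 2) p / real (i + 2) * indicator B p) \<le> 2" for i
      proof (rule AE_I2)
        fix p assume "p \<in> space M"
        then have p: "0 < p" "p \<le> 1" using sp by auto
        have i: "2 \<le> i + 2" by simp
        show "norm (Fn (i + 2) p / real (i + 2) * indicator B p) \<le> 2"
          using Fn_over_n_bound[OF i p] by (auto simp: indicator_def)
      qed
    qed
    then have "(\<lambda>n. \<integral>p. Fn n p / real n * indicator B p \<partial>M) \<longlonglongrightarrow> (\<integral>p. indicator B p \<partial>M)"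
      by (rule LIMSEQ_offset)
    then show ?thesis using B by (simp add: I_def integral_indicator Int_absorb2 sets.sets_into_space)
  qed
  have nn: "(\<integral>\<^sup>+ p\<in>B. exp_tau n p \<partial>M) = ennreal (real n * I n B)" if B: "B \<in> sets M" and n: "n \<ge> 2" for n B
  proof -
    have "(\<integral>\<^sup>+ p\<in>B. exp_tau n p \<partial>M) = (\<integral>\<^sup>+ p. ennreal (real n * (Fn n p / real n * indicator B p)) \<partial>M)"
    proof (rule nn_integral_cong)
      fix p assume "p \<in> space M"
      then have p: "0 < p" "p \<le> 1" using sp by auto
      show "exp_tau n p * indicator B p = ennreal (real n * (Fn n p / real n * indicator B p))"
        using exp_tau_Fn[OF n p] n by (auto simp: indicator_def)
    qed
    also have "\<dots> = ennreal (\<integral>p. real n * (Fn n p / real n * indicator B p) \<partial>M)"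
    proof (rule nn_integral_eq_integral)
      show "integrable M (\<lambda>p. real n * (Fn n p / real n * indicator B p))"
      proof (rule finite_measure.integrable_const_bound[where B = "real n * 2"])
        show "finite_measure M" by (rule finite_measure_axioms)
        show "AE p in M. norm (real n * (Fn n p / real n * indicator B p)) \<le> real n * 2"
        proof (rule AE_I2)
          fix p assume "p \<in> space M"
          then have p: "0 < p" "p \<le> 1" using sp by auto
          have "norm (Fn n p / real n * indicator B p) \<le> 2"
            using Fn_over_n_bound[OF n p] by (auto simp: indicator_def)
          then show "norm (real n * (Fn n p / real n * indicator B p)) \<le> real n * 2"
            by (simp only: norm_mult norm_of_nat) (rule mult_left_mono; simp)
        qed
        show "(\<lambda>p. real n * (Fn n p / real n * indicator B p)) \<in> borel_measurable M"
          using meas_s[OF B, of n] by measurable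
      qed
      show "AE p in M. 0 \<le> real n * (Fn n p / real n * indicator B p)"
      proof (rule AE_I2)
        fix p assume "p \<in> space M"
        then have p: "0 < p" "p \<le> 1" using sp by auto
        show "0 \<le> real n * (Fn n p / real n * indicator B p)"
          using Fn_over_n_bound[OF n p] by (intro mult_nonneg_nonneg) (auto simp: indicator_def)
      qed
    qed
    also have "\<dots> = ennreal (real n * I n B)"
      unfolding I_def by (simp add: integral_mult_right_zero)
    finally show ?thesis .
  qed
  have Inn: "0 \<le> I n B" if "n \<ge> 2" for n B
    unfolding I_def
  proof (rule integral_nonneg_AE, rule AE_I2)
    fix p assume "p \<in> space M"
    then have p: "0 < p" "p \<le> 1" using sp by auto
    show "0 \<le> Fn n p / real n * indicator B p"
      using Fn_over_n_bound[OF that p] by (auto simp: indicator_def)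
  qed
  have convO: "(\<lambda>n. I n (space M)) \<longlonglongrightarrow> 1"
    using conv[OF sets.top] prob_space by simp
  have evpos: "\<forall>\<^sub>F n in sequentially. I n (space M) > 0"
    using order_tendstoD(1)[OF convO, of 0] by simp
  have ev: "\<forall>\<^sub>F n in sequentially. ennreal (I n A / I n (space M)) = mu_tilt M n A"
  proof (rule eventually_mono[OF eventually_conj[OF evpos eventually_ge_at_top[of 2]]])
    fix n assume h: "0 < I n (space M) \<and> 2 \<le> n"
    then have n: "n \<ge> 2" and pos: "0 < I n (space M)" by auto
    have tot: "(\<integral>\<^sup>+ p. exp_tau n p \<partial>M) = (\<integral>\<^sup>+ p\<in>space M. exp_tau n p \<partial>M)"
      by (intro nn_integral_cong) (simp add: indicator_def)
    have "mu_tilt M n A = ennreal (real n * I n A) / ennreal (real n * I n (space M))"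
      unfolding mu_tilt_def tot nn[OF assms(3) n] nn[OF sets.top n] ..
    also have "\<dots> = ennreal (real n * I n A / (real n * I n (space M)))"
      by (rule divide_ennreal) (use n pos Inn[OF n, of A] in auto)
    also have "real n * I n A / (real n * I n (space M)) = I n A / I n (space M)"
      using n by simp
    finally show "ennreal (I n A / I n (space M)) = mu_tilt M n A" by simp
  qed
  have "(\<lambda>n. ennreal (I n A / I n (space M))) \<longlonglongrightarrow> ennreal (measure M A / 1)"
    by (intro tendsto_ennrealI tendsto_divide conv[OF assms(3)] convO) simp
  then have "(\<lambda>n. mu_tilt M n A) \<longlonglongrightarrow> ennreal (measure M A)"
    using Lim_transform_eventually[OF _ ev] by simp
  then show ?thesis by (simp add: emeasure_eq_measure)
qed


end
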